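(* Let $L_1,\ldots,L_r$ be real linear forms in $n$ variables, $L_i(\mathbf x)=\sum_{j\le n}\lambda_{i,j}x_j$, such that for every $\boldsymbol\alpha\in\mathbb{R}^r\setminus\{\mathbf0\}$ the form $\boldsymbol\alpha\cdot\mathbf L$ does not have all coefficients rational. Let $\Lambda$ be the $n\times r$ matrix with $(j,i)$ entry $\lambda_{i,j}$. For $\boldsymbol\alpha\in\mathbb{R}^r$ and $P\ge1$ let \[ \mathcal F(\boldsymbol\alpha;P)=\sup_{q\in\mathbb N,\ \mathbf a\in\mathbb{Z}^n}\ \prod_{v\le n}\big(q+P|q\lambda_v-a_v|\big)^{-1},\qquad\text{where }\boldsymbol\lambda=\Lambda\boldsymbol\alpha . \] Then for any $0<V\le W$, \[ \sup_{V\le|\Lambda\boldsymbol\alpha|\le W}\mathcal F(\boldsymbol\alpha;P)\to0\qquad(P\to\infty). \]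
   Context: $|\mathbf y|=\max_i|y_i|$ for vectors. *)

theory Defs
  imports "HOL-Analysis.Analysis"
begin

definition supnorm :: "real^'n \<Rightarrow> real" where
  "supnorm y = Max (range (\<lambda>j. \<bar>y $ j\<bar>))"

text \<open>The matrix Lambda (n x r) with (j,i) entry lambda_{i,j}, given the
  coefficient rows L$i$j = lambda_{i,j} of the forms L_1..L_r.\<close>
definition LamMat :: "real^'n^'r \<Rightarrow> real^'r^'n" where
  "LamMat L = transpose L"

definition Fcal :: "real^'n^'r \<Rightarrow> real^'r \<Rightarrow> real \<Rightarrow> real" where
  "Fcal L \<alpha> P = Sup {(\<Prod>v\<in>UNIV. inverse (real q + P * \<bar>real q * (LamMat L *v \<alpha>) $ v - of_int (a $ v)\<bar>))
                      | (q::nat) (a::int^'n). q \<ge> 1}"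

end

theory Submission
  imports Defs
begin

lemma supnorm_ge: "\<bar>y $ j\<bar> \<le> supnorm y"
  unfolding supnorm_def by (rule Max_ge) auto

lemma supnorm_le: "(\<And>j. \<bar>y $ j\<bar> \<le> c) \<Longrightarrow> supnorm y \<le> c"
  unfolding supnorm_def by (subst Max_le_iff) auto

lemma supnorm_attain: "\<exists>j. supnorm y = \<bar>y $ j\<bar>"
proof -
  have "supnorm y \<in> range (\<lambda>j. \<bar>y $ j\<bar>)"
    unfolding supnorm_def by (rule Max_in) auto
  then show ?thesis by auto
qed

lemma prod_le_factor:
  fixes f :: "'a::finite \<Rightarrow> real"
  assumes "\<And>v. 0 \<le> f v \<and> f v \<le> 1"
  shows "prod f UNIV \<le> f w"
proof -
  have "prod f UNIV = f w * prod f (UNIV - {w})"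
    by (simp add: prod.remove)
  also have "\<dots> \<le> f w * 1"
    by (rule mult_left_mono) (auto intro!: prod_le_1 assms simp: assms)
  finally show ?thesis by simp
qed

lemma factor_bounds:
  assumes "q \<ge> 1" "P \<ge> 0"
  shows "0 \<le> inverse (real q + P * \<bar>t\<bar>) \<and> inverse (real q + P * \<bar>t\<bar>) \<le> inverse (real q)"
proof -
  have "real q \<ge> 1" using assms by simp
  moreover have "P * \<bar>t\<bar> \<ge> 0" using assms by simp
  ultimately show ?thesis by (auto intro!: le_imp_inverse_le)
qed

lemma elem_bound:
  fixes x :: "real^'n" and a :: "int^'n"
  assumes "q \<ge> 1" "P \<ge> 0"
  shows "(\<Prod>v\<in>UNIV. inverse (real q + P * \<bar>real q * x $ v - of_int (a $ v)\<bar>))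
          \<le> inverse (real q + P * \<bar>real q * x $ w - of_int (a $ w)\<bar>)"
  and "0 \<le> (\<Prod>v\<in>UNIV. inverse (real q + P * \<bar>real q * x $ v - of_int (a $ v)\<bar>))"
proof -
  have b: "0 \<le> inverse (real q + P * \<bar>real q * x $ v - of_int (a $ v)\<bar>) \<and>
      inverse (real q + P * \<bar>real q * x $ v - of_int (a $ v)\<bar>) \<le> 1" for v
    using factor_bounds[OF assms, of "real q * x $ v - of_int (a $ v)"] assms
    by (smt (verit) inverse_le_1_iff of_nat_1 of_nat_mono)
  show "(\<Prod>v\<in>UNIV. inverse (real q + P * \<bar>real q * x $ v - of_int (a $ v)\<bar>))
          \<le> inverse (real q + P * \<bar>real q * x $ w - of_int (a $ w)\<bar>)"
    by (rule prod_le_factor) (use b in auto)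
  show "0 \<le> (\<Prod>v\<in>UNIV. inverse (real q + P * \<bar>real q * x $ v - of_int (a $ v)\<bar>))"
    using b by (simp add: prod_nonneg)
qed

theorem mainTheorem7:
  fixes L :: "real^'n^'r" and V W :: real
  assumes irr: "\<And>\<alpha>::real^'r. \<alpha> \<noteq> 0 \<Longrightarrow> \<exists>j. (\<Sum>i\<in>UNIV. \<alpha> $ i * L $ i $ j) \<notin> \<rat>"
    and V: "0 < V" and VW: "V \<le> W"
  shows "((\<lambda>P. SUP \<alpha>\<in>{\<alpha>. V \<le> supnorm (LamMat L *v \<alpha>) \<and> supnorm (LamMat L *v \<alpha>) \<le> W}. Fcal L \<alpha> P)
           \<longlongrightarrow> 0) at_top"
proof -
  define M where "M = LamMat L"
  define N where "N = real CARD('n)"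
  have N1: "N \<ge> 1" unfolding N_def by simp
  define A where "A = {\<alpha>. V \<le> supnorm (M *v \<alpha>) \<and> supnorm (M *v \<alpha>) \<le> W}"
  define C where "C = range ((*v) M) \<inter> {x. V \<le> norm x \<and> norm x \<le> N*W}"
  have Mcomp: "(M *v \<alpha>) $ j = (\<Sum>i\<in>UNIV. \<alpha> $ i * L $ i $ j)" for \<alpha> j
    unfolding M_def LamMat_def matrix_vector_mult_def transpose_def
    by (simp add: mult.commute)
  have AC: "M *v \<alpha> \<in> C" if "\<alpha> \<in> A" for \<alpha>
  proof -
    let ?x = "M *v \<alpha>"
    obtain j where j: "supnorm ?x = \<bar>?x $ j\<bar>" using supnorm_attain by blast
    have "V \<le> norm ?x" using that j component_le_norm_cart[of ?x j] unfolding A_def by auto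
    moreover have "norm ?x \<le> N * W"
    proof -
      have "norm ?x \<le> (\<Sum>i\<in>UNIV. \<bar>?x $ i\<bar>)" by (rule norm_le_l1_cart)
      also have "\<dots> \<le> (\<Sum>i\<in>(UNIV::'n set). W)"
        by (rule sum_mono) (use that supnorm_ge[of ?x] in \<open>auto simp: A_def intro: order_trans\<close>)
      finally show ?thesis by (simp add: N_def)
    qed
    ultimately show ?thesis unfolding C_def by auto
  qed
  have compC: "compact C"
  proof -
    have "closed (range ((*v) M))"
      by (rule closed_subspace, rule linear_subspace_image[OF matrix_vector_mul_linear], simp)
    moreover have "closed {x::real^'n. V \<le> norm x \<and> norm x \<le> N*W}"
      by (intro closed_Collect_conj closed_Collect_le continuous_intros)
    ultimately have "closed C" unfolding C_def by (rule closed_Int)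
    moreover have "bounded C" unfolding C_def bounded_iff by auto
    ultimately show ?thesis by (simp add: compact_eq_bounded_closed)
  qed
  have notint: "\<exists>v. real q * x $ v \<notin> \<int>" if xC0: "x \<in> C" and q10: "q \<ge> 1" for x q
  proof -
    obtain \<alpha> where x: "x = M *v \<alpha>" using xC0 unfolding C_def by blast
    have "x \<noteq> 0" using xC0 V unfolding C_def by auto
    hence "\<alpha> \<noteq> 0" using x by auto
    then obtain j where j: "(\<Sum>i\<in>UNIV. \<alpha> $ i * L $ i $ j) \<notin> \<rat>" using irr by blast
    have "real q * x $ j \<notin> \<int>"
    proof
      assume "real q * x $ j \<in> \<int>"
      hence "real q * x $ j \<in> \<rat>" using Ints_subset_Rats by blast
      hence "(real q * x $ j) / real q \<in> \<rat>" by (intro Rats_divide) auto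
      hence "x $ j \<in> \<rat>" using q10 by simp
      thus False using j x Mcomp by simp
    qed
    thus ?thesis by blast
  qed
  define g where "g q (x::real^'n) = (\<Sum>v\<in>UNIV. infdist (real q * x $ v) \<int>)" for q x
  have gpos: "g q x > 0" if gp: "x \<in> C" "q \<ge> 1" for x q
  proof -
    obtain v where v: "real q * x $ v \<notin> \<int>" using notint[OF gp] by blast
    have "infdist (real q * x $ v) \<int> \<noteq> 0"
      using v in_closed_iff_infdist_zero[of "\<int>::real set"] by auto
    hence "infdist (real q * x $ v) \<int> > 0" using infdist_nonneg[of "real q * x $ v" "\<int>"]
      by linarith
    also have "\<dots> \<le> g q x" unfolding g_def
      by (rule member_le_sum) (auto simp: infdist_nonneg)
    finally show ?thesis .
  qed
  have gcont: "continuous_on C (g q)" for q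
    unfolding g_def by (intro continuous_intros)
  have gmin: "\<exists>\<delta>>0. \<forall>x\<in>C. \<delta> \<le> g q x" if gq: "q \<ge> 1" for q
  proof (cases "C = {}")
    case True thus ?thesis by (auto intro: exI[of _ 1])
  next
    case False
    obtain x0 where "x0 \<in> C" "\<forall>x\<in>C. g q x0 \<le> g q x"
      using continuous_attains_inf[OF compC False gcont] by blast
    thus ?thesis using gpos[OF _ gq] by blast
  qed
  have key: "\<exists>P0. \<forall>P\<ge>P0. \<forall>\<alpha>\<in>A. 0 \<le> Fcal L \<alpha> P \<and> Fcal L \<alpha> P \<le> e/2" if e: "e > 0" for e
  proof -
    define Q where "Q = nat \<lceil>2/e\<rceil>"
    have "\<forall>q\<in>{1..Q}. \<exists>\<delta>>0. \<forall>x\<in>C. \<delta> \<le> g q x" using gmin by auto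
    then obtain d where d: "\<And>q. q \<in> {1..Q} \<Longrightarrow> d q > 0 \<and> (\<forall>x\<in>C. d q \<le> g q x)"
      by metis
    define \<delta> where "\<delta> = Min (insert 1 (d ` {1..Q}))"
    have \<delta>pos: "\<delta> > 0" unfolding \<delta>_def using d by (subst Min_gr_iff) auto
    have \<delta>le: "\<delta> \<le> g q x" if "q \<in> {1..Q}" "x \<in> C" for q x
    proof -
      have "\<delta> \<le> d q" unfolding \<delta>_def using that by (intro Min_le) auto
      thus ?thesis using d that by fastforce
    qed
    define P0 where "P0 = 2 * N / (\<delta> * e) + 1"
    have "\<forall>P\<ge>P0. \<forall>\<alpha>\<in>A. 0 \<le> Fcal L \<alpha> P \<and> Fcal L \<alpha> P \<le> e/2"
    proof (intro allI impI ballI)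
      fix P \<alpha> assume P: "P \<ge> P0" and \<alpha>: "\<alpha> \<in> A"
      have P0pos: "P0 > 0" unfolding P0_def using N1 \<delta>pos e by (simp add: field_simps add_pos_pos)
      hence Ppos: "P > 0" using P by simp
      define x where "x = M *v \<alpha>"
      have xC: "x \<in> C" using AC[OF \<alpha>] by (simp add: x_def)
      define S where "S = {(\<Prod>v\<in>UNIV. inverse (real q + P * \<bar>real q * x $ v - of_int (a $ v)\<bar>))
                      | (q::nat) (a::int^'n). q \<ge> 1}"
      have F: "Fcal L \<alpha> P = Sup S" unfolding Fcal_def S_def x_def M_def ..
      have Sbound: "s \<le> e/2" if "s \<in> S" for s
      proof -
        obtain q a where q: "q \<ge> 1" and s: "s = (\<Prod>v\<in>UNIV. inverse (real q + P * \<bar>real q * x $ v - of_int (a $ v)\<bar>))"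
          using \<open>s \<in> S\<close> unfolding S_def by blast
        show ?thesis
        proof (cases "q \<le> Q")
          case True
          have dl: "\<delta> \<le> g q x" using \<delta>le[OF _ xC] True q by auto
          have "\<exists>w. \<delta> / N \<le> infdist (real q * x $ w) \<int>"
          proof (rule ccontr)
            assume "\<not> ?thesis"
            hence lt: "\<And>w. infdist (real q * x $ w) \<int> < \<delta> / N" by (simp add: not_le)
            have "g q x < (\<Sum>w\<in>(UNIV::'n set). \<delta> / N)"
              unfolding g_def by (rule sum_strict_mono) (auto simp: lt)
            also have "\<dots> = \<delta>" using N1 by (simp add: N_def)
            finally show False using dl by simp
          qed
          then obtain w where w: "\<delta> / N \<le> infdist (real q * x $ w) \<int>" by blast
          have "infdist (real q * x $ w) \<int> \<le> dist (real q * x $ w) (of_int (a $ w))"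
            by (rule infdist_le) simp
          hence dw: "\<delta> / N \<le> \<bar>real q * x $ w - of_int (a $ w)\<bar>" using w by (simp add: dist_real_def)
          have "s \<le> inverse (real q + P * \<bar>real q * x $ w - of_int (a $ w)\<bar>)"
            unfolding s using elem_bound(1)[OF q, of P x a w] Ppos by simp
          also have "\<dots> \<le> inverse (P * (\<delta> / N))"
          proof (rule le_imp_inverse_le)
            show "0 < P * (\<delta> / N)" using Ppos \<delta>pos N1 by simp
            show "P * (\<delta> / N) \<le> real q + P * \<bar>real q * x $ w - of_int (a $ w)\<bar>"
              using mult_left_mono[OF dw, of P] Ppos by simp
          qed
          also have "\<dots> \<le> e / 2"
          proof -
            have "2 * N / (\<delta> * e) \<le> P" using P unfolding P0_def by simp
            hence "2 * N \<le> P * (\<delta> * e)" using \<delta>pos e by (simp add: field_simps)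
            thus ?thesis using Ppos \<delta>pos N1 e by (simp add: field_simps)
          qed
          finally show ?thesis .
        next
          case False
          have "s \<le> inverse (real q + P * \<bar>real q * x $ w - of_int (a $ w)\<bar>)" for w
            unfolding s using elem_bound(1)[OF q, of P x a w] Ppos by simp
          also have "inverse (real q + P * \<bar>real q * x $ w - of_int (a $ w)\<bar>) \<le> inverse (real q)" for w
            using factor_bounds[OF q, of P] Ppos by simp
          also have "inverse (real q) \<le> e/2"
          proof -
            have "2/e \<le> real Q" unfolding Q_def by linarith
            hence "2/e < real q" using False by simp
            thus ?thesis using e q by (simp add: field_simps)
          qed
          finally show ?thesis by blast
        qed
      qed
      have Sne: "(\<Prod>v\<in>UNIV. inverse (real 1 + P * \<bar>real 1 * x $ v - of_int ((0::int^'n) $ v)\<bar>)) \<in> S"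
        unfolding S_def by blast
      have S0: "0 \<le> (\<Prod>v\<in>UNIV. inverse (real 1 + P * \<bar>real 1 * x $ v - of_int ((0::int^'n) $ v)\<bar>))"
        using elem_bound(2)[of 1 P x 0] Ppos by simp
      have "0 \<le> Sup S"
        using S0 cSup_upper[OF Sne] Sbound by (meson bdd_aboveI order_trans)
      moreover have "Sup S \<le> e/2" using Sne Sbound by (intro cSup_least) auto
      ultimately show "0 \<le> Fcal L \<alpha> P \<and> Fcal L \<alpha> P \<le> e/2" using F by simp
    qed
    thus ?thesis by blast
  qed
  have Ane: "A \<noteq> {}"
  proof -
    obtain i :: 'r where True by simp
    let ?a = "axis i (1::real)"
    have "?a \<noteq> 0" by (simp add: axis_eq_0_iff)
    then obtain j where j: "(M *v ?a) $ j \<notin> \<rat>" using irr Mcomp by metis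
    define y where "y = M *v ?a"
    define s where "s = supnorm y"
    have "0 < \<bar>y $ j\<bar>" using j y_def by (metis Rats_0 zero_less_abs_iff)
    hence spos: "s > 0" using supnorm_ge[of y j] s_def by linarith
    obtain k where k: "s = \<bar>y $ k\<bar>" using supnorm_attain s_def by blast
    define \<beta> where "\<beta> = (V / s) *\<^sub>R ?a"
    have My: "M *v \<beta> = (V / s) *\<^sub>R y" unfolding \<beta>_def y_def
      by (simp add: matrix_vector_mult_scaleR)
    have "V \<le> supnorm (M *v \<beta>)"
    proof -
      have "\<bar>(M *v \<beta>) $ k\<bar> = V" using My k spos V by (simp add: abs_mult)
      thus ?thesis using supnorm_ge[of "M *v \<beta>" k] by simp
    qed
    moreover have "supnorm (M *v \<beta>) \<le> W"
    proof (rule supnorm_le)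
      fix l
      have "\<bar>y $ l\<bar> \<le> s" using supnorm_ge s_def by simp
      hence "(V / s) * \<bar>y $ l\<bar> \<le> (V/s) * s" using V spos by (intro mult_left_mono) auto
      thus "\<bar>(M *v \<beta>) $ l\<bar> \<le> W" using My spos V VW by (simp add: abs_mult)
    qed
    ultimately have "\<beta> \<in> A" unfolding A_def by simp
    thus ?thesis by blast
  qed
  show ?thesis
    unfolding M_def[symmetric] A_def[symmetric]
  proof (rule tendstoI)
    fix e :: real assume e: "e > 0"
    obtain P0 where P0: "\<forall>P\<ge>P0. \<forall>\<alpha>\<in>A. 0 \<le> Fcal L \<alpha> P \<and> Fcal L \<alpha> P \<le> e/2"
      using key[OF e] by blast
    show "\<forall>\<^sub>F P in at_top. dist (SUP \<alpha>\<in>A. Fcal L \<alpha> P) 0 < e"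
      unfolding eventually_at_top_linorder
    proof (intro exI allI impI)
      fix P assume P: "P \<ge> P0"
      obtain \<alpha>0 where a0: "\<alpha>0 \<in> A" using Ane by blast
      have bdd: "bdd_above ((\<lambda>\<alpha>. Fcal L \<alpha> P) ` A)" using P0 P by (intro bdd_aboveI[where M="e/2"]) auto
      have "0 \<le> (SUP \<alpha>\<in>A. Fcal L \<alpha> P)"
        using P0 P a0 cSUP_upper[OF a0 bdd] by (meson order_trans)
      moreover have "(SUP \<alpha>\<in>A. Fcal L \<alpha> P) \<le> e/2"
        using P0 P Ane by (intro cSUP_least) auto
      ultimately show "dist (SUP \<alpha>\<in>A. Fcal L \<alpha> P) 0 < e" using e by simp
    qed
  qed
qed

end
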